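(* Let $\mathcal M=(S,A,P)$ be an MDP, $T\subseteq S$ a set of sink target states, $\mathcal M'$ the pruned MDP and $s_0\in S'$. For every strategy $\sigma\in\Sigma^{\mathrm{Opt}}_{\mathcal M}$, $$\Pr'_{\sigma,s_0}(\Diamond T)=\frac{\Pr_{\sigma,s_0}(\Diamond T)}{\mathrm{Val}(s_0)}.$$
   Context: An MDP is $\mathcal M=(S,A,P)$ with $S,A$ finite and $P$ a partial map $S\times A\to\mathrm{Dist}(S)$; $a$ is legal at $s$ if $P(s,a)$ is defined; $P(s,a,s')=P(s,a)(s')$. A strategy maps finite paths $s_0a_0\dots s_n$ (with $a_i$ legal at $s_i$, $P(s_i,a_i,s_{i+1})>0$) to distributions over legal actions at the last state. $\Pr_{\sigma,s}$ is the induced probability measure on infinite paths from $s$. States of $T$ are sinks; $\Diamond T$ is the event of visiting $T$; $\mathrm{Val}(s)=\max_\sigma\Pr_{\sigma,s}(\Diamond T)$. $\mathrm{Opt}_{\mathcal M}=\{(s,a): a\text{ legal at }s,\ \mathrm{Val}(s)=\sum_{s'}P(s,a,s')\mathrm{Val}(s')\}$; $\Sigma^{\mathrm{Opt}}_{\mathcal M}$ is the set of strategies that, after every finite path $\rho$, only give positive probability to actions $a$ with $(\mathrm{last}(\rho),a)\in\mathrm{Opt}_{\mathcal M}$. The pruned MDP $\mathcal M'=(S',A,P')$ has $S'=\{s:\mathrm{Val}(s)>0\}$ and $P'(s,a,s')=P(s,a,s')\mathrm{Val}(s')/\mathrm{Val}(s)$ if $s\in S'$ and $(s,a)\in\mathrm{Opt}_{\mathcal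 M}$ (undefined otherwise). Strategies in $\Sigma^{\mathrm{Opt}}_{\mathcal M}$ are identified with strategies of $\mathcal M'$ by restriction to finite paths of $\mathcal M'$; $\Pr'_{\sigma,s}$ is the induced measure in $\mathcal M'$. *)

theory Defs
  imports "HOL-Probability.Probability"
begin

text \<open>An MDP with finite state type 's and finite action type 'a is a partial map
  P :: 's => 'a => ('s => real) option; P s a = Some d means action a is legal at s
  and d is its successor distribution (d s' = P(s,a,s')).\<close>

type_synonym ('s, 'a) mdp = "'s \<Rightarrow> 'a \<Rightarrow> ('s \<Rightarrow> real) option"

definition legal :: "('s, 'a) mdp \<Rightarrow> 's \<Rightarrow> 'a set" where
  "legal P s = {a. P s a \<noteq> None}"

definition tprob :: "('s, 'a) mdp \<Rightarrow> 's \<Rightarrow> 'a \<Rightarrow> 's \<Rightarrow> real" where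
  "tprob P s a s' = (case P s a of None \<Rightarrow> 0 | Some d \<Rightarrow> d s')"

definition is_mdp :: "('s::finite, 'a::finite) mdp \<Rightarrow> bool" where
  "is_mdp P \<longleftrightarrow> (\<forall>s a d. P s a = Some d \<longrightarrow> (\<forall>s'. d s' \<ge> 0) \<and> (\<Sum>s'\<in>UNIV. d s') = 1)
                 \<and> (\<forall>s. legal P s \<noteq> {})"

definition sinks :: "('s, 'a) mdp \<Rightarrow> 's set \<Rightarrow> bool" where
  "sinks P T \<longleftrightarrow> (\<forall>t\<in>T. \<forall>a\<in>legal P t. tprob P t a t = 1)"

text \<open>A finite path s_0 a_0 ... s_{n-1} a_{n-1} s_n is represented by its history
  [(s_0,a_0),...,(s_{n-1},a_{n-1})] and its last state s_n.\<close>
fun valid_path :: "('s, 'a) mdp \<Rightarrow> ('s \<times> 'a) list \<Rightarrow> 's \<Rightarrow> bool" where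
  "valid_path P [] s = True"
| "valid_path P ((t, a) # h) s =
     (a \<in> legal P t \<and> tprob P t a (case h of [] \<Rightarrow> s | (u, _) # _ \<Rightarrow> u) > 0 \<and> valid_path P h s)"

type_synonym ('s, 'a) strat = "('s \<times> 'a) list \<Rightarrow> 's \<Rightarrow> 'a pmf"

definition is_strategy :: "('s, 'a) mdp \<Rightarrow> ('s, 'a) strat \<Rightarrow> bool" where
  "is_strategy P \<sigma> \<longleftrightarrow> (\<forall>h s. valid_path P h s \<longrightarrow> set_pmf (\<sigma> h s) \<subseteq> legal P s)"

fun path_prob :: "('s, 'a) mdp \<Rightarrow> ('s, 'a) strat \<Rightarrow> ('s \<times> 'a) list \<Rightarrow> 's \<Rightarrow> ('a \<times> 's) list \<Rightarrow> real" where
  "path_prob P \<sigma> hist s [] = 1"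
| "path_prob P \<sigma> hist s ((a, s') # rest) =
     pmf (\<sigma> hist s) a * tprob P s a s' * path_prob P \<sigma> (hist @ [(s, a)]) s' rest"

definition first_hit :: "'s set \<Rightarrow> 's \<Rightarrow> ('a \<times> 's) list \<Rightarrow> bool" where
  "first_hit T s xs \<longleftrightarrow> (let sts = s # map snd xs in
      last sts \<in> T \<and> (\<forall>t\<in>set (butlast sts). t \<notin> T))"

text \<open>Pr_{sigma,s}(<> T): the measure of the event <>T on infinite paths is the
  (countable, disjoint) sum over the cylinders of first-hitting finite paths,
  i.e. the limit of the probabilities of reaching T within n steps.\<close>
definition reach_prob :: "('s::finite, 'a::finite) mdp \<Rightarrow> ('s, 'a) strat \<Rightarrow> 's set \<Rightarrow> 's \<Rightarrow> real" where
  "reach_prob P \<sigma> T s =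
     (SUP n. \<Sum>k\<le>n. \<Sum>xs\<in>{xs. length xs = k \<and> first_hit T s xs}. path_prob P \<sigma> [] s xs)"

definition Val :: "('s::finite, 'a::finite) mdp \<Rightarrow> 's set \<Rightarrow> 's \<Rightarrow> real" where
  "Val P T s = (SUP \<sigma>\<in>{\<sigma>. is_strategy P \<sigma>}. reach_prob P \<sigma> T s)"

definition Opt :: "('s::finite, 'a::finite) mdp \<Rightarrow> 's set \<Rightarrow> ('s \<times> 'a) set" where
  "Opt P T = {(s, a). a \<in> legal P s \<and> Val P T s = (\<Sum>s'\<in>UNIV. tprob P s a s' * Val P T s')}"

definition opt_strategies :: "('s::finite, 'a::finite) mdp \<Rightarrow> 's set \<Rightarrow> ('s, 'a) strat set" where
  "opt_strategies P T = {\<sigma>. is_strategy P \<sigma> \<and>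
      (\<forall>h s. valid_path P h s \<longrightarrow> set_pmf (\<sigma> h s) \<subseteq> {a. (s, a) \<in> Opt P T})}"

definition pos_states :: "('s::finite, 'a::finite) mdp \<Rightarrow> 's set \<Rightarrow> 's set" where
  "pos_states P T = {s. Val P T s > 0}"

text \<open>The pruned MDP M' (on the same state type; states outside S' have no legal
  actions and are never reached from S' with positive probability).\<close>
definition pruned :: "('s::finite, 'a::finite) mdp \<Rightarrow> 's set \<Rightarrow> ('s, 'a) mdp" where
  "pruned P T s a = (if s \<in> pos_states P T \<and> (s, a) \<in> Opt P T
      then Some (\<lambda>s'. tprob P s a s' * Val P T s' / Val P T s) else None)"

end

theory Submission
  imports Defs
begin

lemma tprob_nonneg: "is_mdp P \<Longrightarrow> tprob P s a s' \<ge> 0"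
  unfolding tprob_def is_mdp_def by (auto split: option.split)

lemma tprob_sum_le: "is_mdp P \<Longrightarrow> (\<Sum>s'\<in>UNIV. tprob P s a s') \<le> 1"
  unfolding tprob_def is_mdp_def by (cases "P s a") auto

lemma path_prob_nonneg: "is_mdp P \<Longrightarrow> path_prob P \<sigma> h s xs \<ge> 0"
  by (induction xs arbitrary: h s) (auto simp: tprob_nonneg)

lemma finite_len: "finite {xs :: ('b::finite) list. length xs = k \<and> Q xs}"
proof -
  have "finite {xs :: 'b list. set xs \<subseteq> UNIV \<and> length xs = k}"
    by (rule finite_lists_length_eq) simp
  then show ?thesis by (rule finite_subset[rotated]) auto
qed

lemma sum_lists_Suc:
  fixes f :: "('b::finite) list \<Rightarrow> real"
  shows "(\<Sum>xs\<in>{xs. length xs = Suc k \<and> Q xs}. f xs)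
       = (\<Sum>x\<in>UNIV. \<Sum>r\<in>{r. length r = k \<and> Q (x#r)}. f (x#r))"
proof -
  have eq: "{xs. length xs = Suc k \<and> Q xs} = (\<lambda>(x,r). x#r) ` (SIGMA x:UNIV. {r. length r = k \<and> Q (x#r)})"
    by (auto simp: length_Suc_conv image_iff)
  have inj: "inj_on (\<lambda>(x,r). x#r) (SIGMA x:UNIV. {r. length r = k \<and> Q (x#r)})"
    by (auto simp: inj_on_def)
  have sig: "(\<Sum>x\<in>UNIV. \<Sum>r\<in>{r. length r = k \<and> Q (x#r)}. f (x#r))
      = (\<Sum>(x,r)\<in>(SIGMA x:UNIV. {r. length r = k \<and> Q (x#r)}). f (x#r))"
    by (rule sum.Sigma) (auto simp: finite_len)
  show ?thesis
    unfolding eq sig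
    by (subst sum.reindex[OF inj]) (simp add: case_prod_unfold)
qed

lemma first_hit_Nil: "first_hit T s [] \<longleftrightarrow> s \<in> T"
  by (simp add: first_hit_def)

lemma first_hit_Cons: "first_hit T s ((a,s')#r) \<longleftrightarrow> s \<notin> T \<and> first_hit T s' r"
  by (auto simp: first_hit_def Let_def)

definition Fk where
  "Fk P \<sigma> T k h s = (\<Sum>xs\<in>{xs. length xs = k \<and> first_hit T s xs}. path_prob P \<sigma> h s xs)"

lemma Fk_0: "Fk P \<sigma> T 0 h s = (if s \<in> T then 1 else 0)"
proof -
  have eq: "{xs. length xs = 0 \<and> first_hit T s xs} = (if s \<in> T then {[]} else {})"
    by (auto simp: first_hit_Nil)
  show ?thesis unfolding Fk_def eq by simp
qed

lemma Fk_Suc: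
  fixes P :: "('s::finite, 'a::finite) mdp"
  shows "Fk P \<sigma> T (Suc k) h s = (if s \<in> T then 0 else
   (\<Sum>a\<in>UNIV. \<Sum>s'\<in>UNIV. pmf (\<sigma> h s) a * tprob P s a s' * Fk P \<sigma> T k (h@[(s,a)]) s'))"
proof -
  have "Fk P \<sigma> T (Suc k) h s = (\<Sum>x\<in>UNIV. \<Sum>r\<in>{r. length r = k \<and> first_hit T s (x#r)}. path_prob P \<sigma> h s (x#r))"
    unfolding Fk_def by (rule sum_lists_Suc)
  also have "\<dots> = (\<Sum>x\<in>UNIV. (if s \<in> T then 0 else
       pmf (\<sigma> h s) (fst x) * tprob P s (fst x) (snd x) * Fk P \<sigma> T k (h@[(s,fst x)]) (snd x)))"
  proof (rule sum.cong[OF refl])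
    fix x :: "'a \<times> 's" obtain a s' where x: "x = (a,s')" by fastforce
    show "(\<Sum>r\<in>{r. length r = k \<and> first_hit T s (x#r)}. path_prob P \<sigma> h s (x#r)) = (if s \<in> T then 0 else
       pmf (\<sigma> h s) (fst x) * tprob P s (fst x) (snd x) * Fk P \<sigma> T k (h@[(s,fst x)]) (snd x))"
      unfolding x by (simp add: first_hit_Cons Fk_def sum_distrib_left)
  qed
  also have "\<dots> = (if s \<in> T then 0 else
   (\<Sum>a\<in>UNIV. \<Sum>s'\<in>UNIV. pmf (\<sigma> h s) a * tprob P s a s' * Fk P \<sigma> T k (h@[(s,a)]) s'))"
    by (simp add: UNIV_Times_UNIV[symmetric] sum.cartesian_product case_prod_unfold del: UNIV_Times_UNIV)
  finally show ?thesis .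
qed

lemma Fk_nonneg: "is_mdp P \<Longrightarrow> Fk P \<sigma> T k h s \<ge> 0"
  unfolding Fk_def by (rule sum_nonneg) (simp add: path_prob_nonneg)

lemma partial_bound:
  fixes P :: "('s::finite, 'a::finite) mdp"
  assumes mdp: "is_mdp P"
  shows "(\<Sum>k\<le>n. Fk P \<sigma> T k h s) \<le> 1"
proof (induction n arbitrary: h s)
  case 0
  then show ?case by (simp add: Fk_0)
next
  case (Suc n)
  have "(\<Sum>k\<le>Suc n. Fk P \<sigma> T k h s) = Fk P \<sigma> T 0 h s + (\<Sum>k\<le>n. Fk P \<sigma> T (Suc k) h s)"
    by (rule sum.atMost_Suc_shift)
  show ?case
  proof (cases "s \<in> T")
    case True
    then show ?thesis unfolding \<open>(\<Sum>k\<le>Suc n. Fk P \<sigma> T k h s) = _\<close> by (simp add: Fk_0 Fk_Suc)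
  next
    case False
    have "(\<Sum>k\<le>Suc n. Fk P \<sigma> T k h s) = (\<Sum>k\<le>n. \<Sum>a\<in>UNIV. \<Sum>s'\<in>UNIV. pmf (\<sigma> h s) a * tprob P s a s' * Fk P \<sigma> T k (h@[(s,a)]) s')"
      unfolding \<open>(\<Sum>k\<le>Suc n. Fk P \<sigma> T k h s) = _\<close> using False by (simp add: Fk_0 Fk_Suc)
    also have "\<dots> = (\<Sum>a\<in>UNIV. \<Sum>s'\<in>UNIV. pmf (\<sigma> h s) a * tprob P s a s' * (\<Sum>k\<le>n. Fk P \<sigma> T k (h@[(s,a)]) s'))"
      by (simp add: sum_distrib_left sum.swap[of _ "{..n}"])
    also have "\<dots> \<le> (\<Sum>a\<in>UNIV. \<Sum>s'\<in>UNIV. pmf (\<sigma> h s) a * tprob P s a s')"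
      by (intro sum_mono mult_left_le) (auto simp: Suc.IH tprob_nonneg[OF mdp])
    also have "\<dots> = (\<Sum>a\<in>UNIV. pmf (\<sigma> h s) a * (\<Sum>s'\<in>UNIV. tprob P s a s'))"
      by (simp add: sum_distrib_left)
    also have "\<dots> \<le> (\<Sum>a\<in>UNIV. pmf (\<sigma> h s) a)"
      by (intro sum_mono mult_right_le_one_le) (auto simp: tprob_sum_le[OF mdp] tprob_nonneg[OF mdp] sum_nonneg)
    also have "\<dots> = 1" by (rule sum_pmf_eq_1) auto
    finally show ?thesis .
  qed
qed

lemma partial_nonneg: "is_mdp P \<Longrightarrow> (\<Sum>k\<le>n. Fk P \<sigma> T k h s) \<ge> 0"
  by (intro sum_nonneg Fk_nonneg)

lemma reach_prob_Fk: "reach_prob P \<sigma> T s = (SUP n. \<Sum>k\<le>n. Fk P \<sigma> T k [] s)"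
  unfolding reach_prob_def Fk_def by simp

lemma reach_bdd: "is_mdp P \<Longrightarrow> bdd_above (range (\<lambda>n. \<Sum>k\<le>n. Fk P \<sigma> T k [] s))"
  by (rule bdd_aboveI[of _ 1]) (auto intro: partial_bound)

lemma reach_prob_bounds:
  assumes "is_mdp P"
  shows "0 \<le> reach_prob P \<sigma> T s \<and> reach_prob P \<sigma> T s \<le> 1"
proof
  show "0 \<le> reach_prob P \<sigma> T s"
    unfolding reach_prob_Fk
  proof -
    have "(\<Sum>k\<le>0. Fk P \<sigma> T k [] s) \<le> (SUP n. \<Sum>k\<le>n. Fk P \<sigma> T k [] s)"
      by (rule cSUP_upper[OF UNIV_I reach_bdd[OF assms]])
    moreover have "(\<Sum>k\<le>(0::nat). Fk P \<sigma> T k [] s) \<ge> 0" by (rule partial_nonneg[OF assms])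
    ultimately show "0 \<le> (SUP n. \<Sum>k\<le>n. Fk P \<sigma> T k [] s)" by linarith
  qed
  show "reach_prob P \<sigma> T s \<le> 1"
    unfolding reach_prob_Fk by (rule cSUP_least) (auto intro: partial_bound assms)
qed

lemma Val_bounds:
  assumes "is_mdp P" "is_strategy P \<sigma>"
  shows "0 \<le> Val P T s"
proof -
  have bdd: "bdd_above ((\<lambda>\<sigma>. reach_prob P \<sigma> T s) ` {\<sigma>. is_strategy P \<sigma>})"
    by (rule bdd_aboveI[of _ 1]) (use reach_prob_bounds[OF assms(1)] in auto)
  have "reach_prob P \<sigma> T s \<le> Val P T s" unfolding Val_def
    by (rule cSUP_upper[OF _ bdd]) (use assms(2) in auto)
  then show ?thesis using reach_prob_bounds[OF assms(1), of \<sigma> T s] by linarith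
qed

lemma reach_T: "t \<in> T \<Longrightarrow> reach_prob P \<sigma> T t = 1"
proof -
  assume t: "t \<in> T"
  have "(\<Sum>k\<le>n. Fk P \<sigma> T k [] t) = 1" for n
    by (induction n) (auto simp: Fk_0 Fk_Suc t)
  then show ?thesis unfolding reach_prob_Fk by simp
qed

lemma Val_T: "is_strategy P \<sigma> \<Longrightarrow> t \<in> T \<Longrightarrow> Val P T t = 1"
  unfolding Val_def by (subst reach_T) (auto intro!: cSUP_const)

lemma valid_path_snoc:
  "valid_path P h s \<Longrightarrow> a \<in> legal P s \<Longrightarrow> tprob P s a s' > 0 \<Longrightarrow> valid_path P (h @ [(s,a)]) s'"
proof (induction h arbitrary: s)
  case Nil then show ?case by simp
next
  case (Cons x h)
  obtain t b where x: "x = (t,b)" by fastforce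
  show ?case using Cons unfolding x by (cases h) auto
qed

lemma tprob_pruned: "tprob (pruned P T) s a s' =
  (if s \<in> pos_states P T \<and> (s,a) \<in> Opt P T then tprob P s a s' * Val P T s' / Val P T s else 0)"
  unfolding tprob_def pruned_def by simp

lemma zero_lemma:
  fixes P :: "('s::finite, 'a::finite) mdp"
  assumes mdp: "is_mdp P" and opt: "\<sigma> \<in> opt_strategies P T"
    and vnn: "\<And>s. Val P T s \<ge> 0"
  shows "valid_path P h s \<Longrightarrow> Val P T s = 0 \<Longrightarrow>
     path_prob P \<sigma> h s xs * Val P T (last (s # map snd xs)) = 0"
proof (induction xs arbitrary: h s)
  case Nil then show ?case by simp
next
  case (Cons x rest)
  obtain a s' where x: "x = (a,s')" by fastforce
  show ?case
  proof (cases "pmf (\<sigma> h s) a = 0 \<or> tprob P s a s' = 0")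
    case True then show ?thesis unfolding x by auto
  next
    case False
    then have aset: "a \<in> set_pmf (\<sigma> h s)" by (simp add: set_pmf_iff)
    with opt Cons.prems have aopt: "(s,a) \<in> Opt P T" and alegal: "a \<in> legal P s"
      unfolding opt_strategies_def is_strategy_def by blast+
    have tp: "tprob P s a s' > 0" using False tprob_nonneg[OF mdp, of s a s'] by linarith
    have "(\<Sum>s''\<in>UNIV. tprob P s a s'' * Val P T s'') = 0"
      using aopt Cons.prems(2) unfolding Opt_def by auto
    then have "tprob P s a s' * Val P T s' = 0"
      using sum_nonneg_eq_0_iff[of UNIV "\<lambda>s''. tprob P s a s'' * Val P T s''"]
        tprob_nonneg[OF mdp] vnn by auto
    then have v0: "Val P T s' = 0" using tp by simp
    have vp: "valid_path P (h @ [(s,a)]) s'" by (rule valid_path_snoc[OF Cons.prems(1) alegal tp])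
    have "path_prob P \<sigma> (h @ [(s,a)]) s' rest * Val P T (last (s' # map snd rest)) = 0"
      by (rule Cons.IH[OF vp v0])
    then show ?thesis unfolding x by simp
  qed
qed

lemma main_path:
  fixes P :: "('s::finite, 'a::finite) mdp"
  assumes mdp: "is_mdp P" and opt: "\<sigma> \<in> opt_strategies P T"
    and vnn: "\<And>s. Val P T s \<ge> 0"
  shows "valid_path P h s \<Longrightarrow> Val P T s > 0 \<Longrightarrow>
     path_prob (pruned P T) \<sigma> h s xs * Val P T s = path_prob P \<sigma> h s xs * Val P T (last (s # map snd xs))"
proof (induction xs arbitrary: h s)
  case Nil then show ?case by simp
next
  case (Cons x rest)
  obtain a s' where x: "x = (a,s')" by fastforce
  show ?case
  proof (cases "pmf (\<sigma> h s) a = 0 \<or> tprob P s a s' = 0")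
    case True then show ?thesis unfolding x by (auto simp: tprob_pruned)
  next
    case False
    then have aset: "a \<in> set_pmf (\<sigma> h s)" by (simp add: set_pmf_iff)
    with opt Cons.prems have aopt: "(s,a) \<in> Opt P T" and alegal: "a \<in> legal P s"
      unfolding opt_strategies_def is_strategy_def by blast+
    have tp: "tprob P s a s' > 0" using False tprob_nonneg[OF mdp, of s a s'] by linarith
    have pos: "s \<in> pos_states P T" using Cons.prems(2) by (simp add: pos_states_def)
    have vp: "valid_path P (h @ [(s,a)]) s'" by (rule valid_path_snoc[OF Cons.prems(1) alegal tp])
    let ?pp' = "path_prob (pruned P T) \<sigma> (h @ [(s,a)]) s' rest"
    let ?pp = "path_prob P \<sigma> (h @ [(s,a)]) s' rest"
    let ?V = "Val P T (last (s' # map snd rest))"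
    have lhs: "path_prob (pruned P T) \<sigma> h s (x # rest) * Val P T s
        = pmf (\<sigma> h s) a * tprob P s a s' * (?pp' * Val P T s')"
      unfolding x using aopt pos Cons.prems(2) by (simp add: tprob_pruned field_simps)
    have rhs: "path_prob P \<sigma> h s (x # rest) * Val P T (last (s # map snd (x # rest)))
        = pmf (\<sigma> h s) a * tprob P s a s' * (?pp * ?V)"
      unfolding x by simp
    show ?thesis
    proof (cases "Val P T s' > 0")
      case True
      show ?thesis unfolding lhs rhs Cons.IH[OF vp True] ..
    next
      case False
      then have v0: "Val P T s' = 0" using vnn[of s'] by linarith
      have "?pp * ?V = 0" by (rule zero_lemma[OF mdp opt vnn vp v0])
      then show ?thesis unfolding lhs rhs using v0 by simp
    qed
  qed
qed

lemma sup_div: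
  fixes a :: "nat \<Rightarrow> real"
  assumes c: "c > 0" and bdd: "\<And>n. a n \<le> B"
  shows "(SUP n. a n / c) = (SUP n. a n) / c"
proof (rule antisym)
  have bdda: "bdd_above (range a)" using bdd by (intro bdd_aboveI[of _ B]) auto
  show "(SUP n. a n / c) \<le> (SUP n. a n) / c"
  proof (rule cSUP_least)
    fix n
    have "a n \<le> (SUP n. a n)" by (rule cSUP_upper[OF _ bdda]) simp
    then show "a n / c \<le> (SUP n. a n) / c" using c by (simp add: divide_right_mono)
  qed simp
  have bddc: "bdd_above (range (\<lambda>n. a n / c))"
    by (rule bdd_aboveI[of _ "B / c"]) (auto intro: divide_right_mono bdd simp: c less_imp_le)
  have "(SUP n. a n) \<le> c * (SUP n. a n / c)"
  proof (rule cSUP_least)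
    fix n
    have "a n / c \<le> (SUP n. a n / c)" by (rule cSUP_upper[OF _ bddc]) simp
    then show "a n \<le> c * (SUP n. a n / c)" using c by (simp add: field_simps)
  qed simp
  then show "(SUP n. a n) / c \<le> (SUP n. a n / c)" using c by (simp add: field_simps)
qed

theorem lemma4:
  fixes P :: "('s::finite, 'a::finite) mdp" and T :: "'s set"
    and s0 :: 's and \<sigma> :: "('s, 'a) strat"
  assumes "is_mdp P" and "sinks P T"
    and "s0 \<in> pos_states P T"
    and "\<sigma> \<in> opt_strategies P T"
  shows "reach_prob (pruned P T) \<sigma> T s0 = reach_prob P \<sigma> T s0 / Val P T s0"
proof -
  have strat: "is_strategy P \<sigma>" using assms(4) by (simp add: opt_strategies_def)
  have vnn: "\<And>s. Val P T s \<ge> 0" by (rule Val_bounds[OF assms(1) strat])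
  have c: "Val P T s0 > 0" using assms(3) by (simp add: pos_states_def)
  have termeq: "path_prob (pruned P T) \<sigma> [] s0 xs = path_prob P \<sigma> [] s0 xs / Val P T s0"
    if "first_hit T s0 xs" for xs
  proof -
    have "last (s0 # map snd xs) \<in> T" using that by (simp add: first_hit_def Let_def)
    then have v1: "Val P T (last (s0 # map snd xs)) = 1" by (rule Val_T[OF strat])
    have "path_prob (pruned P T) \<sigma> [] s0 xs * Val P T s0 = path_prob P \<sigma> [] s0 xs"
      using main_path[OF assms(1,4) vnn, of "[]" s0 xs] c v1 by simp
    then show ?thesis using c by (simp add: field_simps)
  qed
  have part: "(\<Sum>k\<le>n. Fk (pruned P T) \<sigma> T k [] s0) = (\<Sum>k\<le>n. Fk P \<sigma> T k [] s0) / Val P T s0" for n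
    unfolding Fk_def sum_divide_distrib by (intro sum.cong refl) (auto simp: termeq)
  show ?thesis
    unfolding reach_prob_Fk part
    by (rule sup_div[OF c partial_bound[OF assms(1)]])
qed

end
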